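(* Let $k\ge k_0$ ($k_0$ a sufficiently large constant) and $\beta\geq k\ln 2-10\ln k$. Let $a$ be a clause on $k$ distinct variables $\partial a$, where each $x\in\partial a$ appears in $a$ either positively ($x\in\partial_1 a$) or negatively ($x\in\partial_{-1}a$). Let $(\nu_{x\to a})_{x\in\partial a}$ be probability distributions on $\{-1,1\}$, set $\partial_{\rm good}a=\{x\in\partial a:\nu_{x\to a}(1)\geq1-e^{-k\beta/2}\}$, and for $x\in\partial a$, $s\in\{\pm1\}$ define $$\hat\nu_{a\to x}(s)=\frac{\sum_{s_a\in\{\pm1\}^{\partial a}}\mathbf 1\{s_x=s\}\psi_{a,\beta}(s_a)\prod_{y\in\partial a\setminus\{x\}}\nu_{y\to a}(s_y)}{\sum_{s_a\in\{\pm1\}^{\partial a}}\psi_{a,\beta}(s_a)\prod_{y\in\partial a\setminus\{x\}}\nu_{y\to a}(s_y)}.$$ Then for every $x\in\partial a$: (a) $e^{-\beta}\leq\hat\nu_{a\to x}(1)/\hat\nu_{a\to x}(-1)\leq e^{\beta}$; (b) if $x\in\partial_1a$, then $\hat\nu_{a\to x}(1)/\hat\nu_{a\to x}(-1)\geq1$; (c) if $\partial_1a=\{x\}$ and $\partial_{-1}a\subset\partial_{\rm good}a$, then $\hat\nu_{a\to x}(1)/\hat\nu_{a\to x}(-1)\geq e^{0.99\beta}$; (d) if $p\ge1$ is an integer with $|(\partial_1a\setminus\{x\})\cap\partial_{\rm good}a|\geq p$, then $\hat\nu_{a\to x}(1)/\hat\nu_{a\to x}(-1)\geq\exp(-\e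xp(-pk\beta/3))$.
   Context: For $s_a\in\{\pm1\}^{\partial a}$ (value $1$ = true), the clause weight is $\psi_{a,\beta}(s_a)=e^{-\beta}$ if every literal of $a$ is false under $s_a$ (i.e. $s_y=-1$ for all $y\in\partial_1a$ and $s_y=1$ for all $y\in\partial_{-1}a$), and $\psi_{a,\beta}(s_a)=1$ otherwise. *)

theory Defs
  imports Complex_Main "HOL-Library.FuncSet"
begin

text \<open>A clause a is given by its (finite) variable set V = \<partial>a and a sign function
  pos: pos y = True iff y \<in> \<partial>_1 a (y appears positively), False iff y \<in> \<partial>_{-1} a.
  Spins take values in {-1,1} (1 = true).\<close>

definition pos_vars :: "'v set \<Rightarrow> ('v \<Rightarrow> bool) \<Rightarrow> 'v set" where
  "pos_vars V pos = {y \<in> V. pos y}"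

definition neg_vars :: "'v set \<Rightarrow> ('v \<Rightarrow> bool) \<Rightarrow> 'v set" where
  "neg_vars V pos = {y \<in> V. \<not> pos y}"

definition configs :: "'v set \<Rightarrow> ('v \<Rightarrow> int) set" where
  "configs V = PiE V (\<lambda>_. {-1, 1})"

definition psi :: "'v set \<Rightarrow> ('v \<Rightarrow> bool) \<Rightarrow> real \<Rightarrow> ('v \<Rightarrow> int) \<Rightarrow> real" where
  "psi V pos \<beta> s =
     (if (\<forall>y\<in>V. (pos y \<longrightarrow> s y = -1) \<and> (\<not> pos y \<longrightarrow> s y = 1)) then exp (-\<beta>) else 1)"

definition good_vars :: "'v set \<Rightarrow> ('v \<Rightarrow> int \<Rightarrow> real) \<Rightarrow> nat \<Rightarrow> real \<Rightarrow> 'v set" where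
  "good_vars V \<nu> k \<beta> = {y \<in> V. \<nu> y 1 \<ge> 1 - exp (- real k * \<beta> / 2)}"

definition msg_hat :: "'v set \<Rightarrow> ('v \<Rightarrow> bool) \<Rightarrow> real \<Rightarrow> ('v \<Rightarrow> int \<Rightarrow> real) \<Rightarrow> 'v \<Rightarrow> int \<Rightarrow> real" where
  "msg_hat V pos \<beta> \<nu> x s =
     (\<Sum>sa\<in>configs V. (if sa x = s then 1 else 0) * psi V pos \<beta> sa * (\<Prod>y\<in>V - {x}. \<nu> y (sa y)))
     / (\<Sum>sa\<in>configs V. psi V pos \<beta> sa * (\<Prod>y\<in>V - {x}. \<nu> y (sa y)))"

definition is_distr :: "(int \<Rightarrow> real) \<Rightarrow> bool" where
  "is_distr m \<longleftrightarrow> m 1 \<ge> 0 \<and> m (-1) \<ge> 0 \<and> m 1 + m (-1) = 1"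

end

theory Submission imports Defs begin

lemma key_sum:
  fixes V :: "'v set" and h :: "int \<Rightarrow> real"
  assumes fin: "finite V" and xV: "x \<in> V" and dist: "\<forall>y\<in>V. is_distr (\<nu> y)"
  shows "(\<Sum>sa\<in>configs V. h (sa x) * psi V pos \<beta> sa * (\<Prod>y\<in>V - {x}. \<nu> y (sa y)))
     = h 1 + h (-1) - (1 - exp (-\<beta>)) * h (if pos x then -1 else 1)
        * (\<Prod>y\<in>V - {x}. \<nu> y (if pos y then -1 else 1))"
proof -
  define fv where "fv y = (if pos y then -1 else (1::int))" for y
  define c where "c = 1 - exp (-\<beta>)"
  define allf where "allf sa = (\<forall>y\<in>V. sa y = fv y)" for sa :: "'v \<Rightarrow> int"
  define P where "P sa = (\<Prod>y\<in>V - {x}. \<nu> y (sa y))" for sa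
  have psi_eq: "psi V pos \<beta> sa = 1 - c * (if allf sa then 1 else 0)" for sa
    unfolding psi_def allf_def fv_def c_def by (auto split: if_splits)
  have finC: "finite (configs V)" unfolding configs_def using fin by (simp add: finite_PiE)
  define g where "g y t = (if y = x then h t else \<nu> y t)" for y t
  have A: "(\<Sum>sa\<in>configs V. h (sa x) * P sa) = h 1 + h (-1)"
  proof -
    have "(\<Sum>sa\<in>configs V. h (sa x) * P sa) = (\<Sum>sa\<in>configs V. \<Prod>y\<in>V. g y (sa y))"
    proof (rule sum.cong[OF refl])
      fix sa
      have "(\<Prod>y\<in>V. g y (sa y)) = g x (sa x) * (\<Prod>y\<in>V - {x}. g y (sa y))"
        using fin xV by (simp add: prod.remove)
      also have "(\<Prod>y\<in>V - {x}. g y (sa y)) = P sa" unfolding P_def g_def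
        by (rule prod.cong) auto
      finally show "h (sa x) * P sa = (\<Prod>y\<in>V. g y (sa y))" by (simp add: g_def)
    qed
    also have "\<dots> = (\<Prod>y\<in>V. \<Sum>t\<in>{-1,1}. g y t)"
      unfolding configs_def by (rule prod_sum_PiE[symmetric]) (use fin in auto)
    also have "\<dots> = (\<Sum>t\<in>{-1,1}. g x t) * (\<Prod>y\<in>V - {x}. \<Sum>t\<in>{-1,1}. g y t)"
      using fin xV by (simp add: prod.remove)
    also have "(\<Prod>y\<in>V - {x}. \<Sum>t\<in>{-1,1}. g y t) = (\<Prod>y\<in>V - {x}. 1)"
      using dist by (intro prod.cong) (auto simp: g_def is_distr_def)
    finally show ?thesis by (simp add: g_def)
  qed
  define F0 where "F0 = (\<lambda>y. if y \<in> V then fv y else undefined)"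
  have filt: "{sa \<in> configs V. allf sa} = {F0}"
    unfolding configs_def allf_def F0_def fv_def by (auto simp: PiE_iff extensional_def split: if_splits)
  have B: "(\<Sum>sa\<in>configs V. (if allf sa then h (sa x) * P sa else 0)) = h (fv x) * P F0"
  proof -
    have "(\<Sum>sa\<in>configs V. (if allf sa then h (sa x) * P sa else 0)) = (\<Sum>sa\<in>{sa \<in> configs V. allf sa}. h (sa x) * P sa)"
      using finC by (simp add: sum.inter_filter)
    also have "\<dots> = h (F0 x) * P F0" unfolding filt by simp
    finally show ?thesis by (simp add: F0_def xV)
  qed
  have PF0: "P F0 = (\<Prod>y\<in>V - {x}. \<nu> y (fv y))" unfolding P_def F0_def by (rule prod.cong) auto
  have "(\<Sum>sa\<in>configs V. h (sa x) * psi V pos \<beta> sa * P sa)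
      = (\<Sum>sa\<in>configs V. h (sa x) * P sa - c * (if allf sa then h (sa x) * P sa else 0))"
    by (rule sum.cong) (auto simp: psi_eq algebra_simps)
  also have "\<dots> = h 1 + h (-1) - c * (h (fv x) * P F0)"
    by (simp add: sum_subtractf sum_distrib_left[symmetric] A B)
  finally show ?thesis unfolding P_def[symmetric] PF0 c_def fv_def by simp
qed

lemma inv_exp: "1 / exp (- (a::real)) = exp a" by (simp add: exp_minus field_simps)

lemma q_bounds:
  assumes fin: "finite V" and dist: "\<forall>y\<in>V. is_distr (\<nu> y)"
  shows "0 \<le> (\<Prod>y\<in>V - {x}. \<nu> y (if pos y then -1 else 1))"
    "(\<Prod>y\<in>V - {x}. \<nu> y (if pos y then -1 else 1)) \<le> 1"
  using dist by (auto intro!: prod_nonneg prod_le_1 simp: is_distr_def split: if_splits)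

lemma ratio:
  fixes V :: "'v set"
  assumes fin: "finite V" and xV: "x \<in> V" and dist: "\<forall>y\<in>V. is_distr (\<nu> y)" and b: "\<beta> \<ge> 0"
  shows "msg_hat V pos \<beta> \<nu> x 1 / msg_hat V pos \<beta> \<nu> x (-1) =
    (if pos x then 1 / (1 - (1 - exp (-\<beta>)) * (\<Prod>y\<in>V - {x}. \<nu> y (if pos y then -1 else 1)))
     else 1 - (1 - exp (-\<beta>)) * (\<Prod>y\<in>V - {x}. \<nu> y (if pos y then -1 else 1)))"
proof -
  define q where "q = (\<Prod>y\<in>V - {x}. \<nu> y (if pos y then -1 else 1))"
  define c where "c = 1 - exp (-\<beta>)"
  have q0: "0 \<le> q" "q \<le> 1" using q_bounds[OF fin dist] unfolding q_def by auto
  have c0: "0 \<le> c" "c < 1" unfolding c_def using b by auto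
  have cq: "c * q < 1" using q0 c0 
  proof -
    have "c * q \<le> c * 1" using q0 c0 by (intro mult_left_mono) auto
    thus ?thesis using c0 by simp
  qed
  have cq0: "0 \<le> c * q" using q0 c0 by simp
  have N: "(\<Sum>sa\<in>configs V. (if sa x = s then 1 else 0) * psi V pos \<beta> sa * (\<Prod>y\<in>V - {x}. \<nu> y (sa y)))
      = 1 - c * (if (if pos x then -1 else 1) = s then 1 else 0) * q" if "s \<in> {-1,1}" for s
    using key_sum[OF fin xV dist, where h="\<lambda>t. if t = s then 1 else 0" and pos=pos and \<beta>=\<beta>] that
    unfolding c_def q_def by auto
  have D: "(\<Sum>sa\<in>configs V. psi V pos \<beta> sa * (\<Prod>y\<in>V - {x}. \<nu> y (sa y))) = 2 - c * q"
    using key_sum[OF fin xV dist, where h="\<lambda>t. 1" and pos=pos and \<beta>=\<beta>]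
    unfolding c_def q_def by simp
  have Dpos: "2 - c * q > 0" using cq by simp
  show ?thesis
    unfolding msg_hat_def N[of 1, simplified] N[of "-1", simplified] D c_def[symmetric] q_def[symmetric]
    using Dpos cq by (auto simp: divide_simps)
qed

lemma final_ineq:
  fixes w :: real assumes w0: "0 \<le> w" and w1: "w \<le> 1/2"
  shows "exp (- (w^2)) \<le> 1 - w^3"
proof -
  have e: "exp (- (w^2)) * exp (w^2) = 1" by (simp add: exp_minus_inverse mult.commute)
  have g: "1 + w^2 \<le> exp (w^2)" by simp
  have "exp (- (w^2)) * (1 + w^2) \<le> 1" using e g
    by (metis exp_gt_zero less_eq_real_def mult_left_mono)
  moreover have "w^3 \<le> 1/8"
  proof -
    have "w^3 \<le> (1/2)^3" using power_mono[OF w1 w0, of 3] .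
    thus ?thesis by (simp add: power_divide)
  qed
  hence "1 - w - w^3 \<ge> 0" using w1 by simp
  hence "w^2 * (1 - w - w^3) \<ge> 0" by simp
  hence "(1 - w^3) * (1 + w^2) \<ge> 1" by (simp add: algebra_simps power_def)
  ultimately have "exp (- (w^2)) * (1 + w^2) \<le> (1 - w^3) * (1 + w^2)" by linarith
  moreover have "1 + w^2 > 0" by (simp add: add_pos_nonneg)
  ultimately show ?thesis by simp
qed

lemma per_clause:
  fixes V :: "nat set"
  assumes fin: "finite V" and cardV: "card V = k" and dist: "\<forall>y\<in>V. is_distr (\<nu> y)"
    and xV: "x \<in> V" and bk: "\<beta> \<ge> real k / 4" and k: "k \<ge> 1000"
  shows "(let r = msg_hat V pos \<beta> \<nu> x 1 / msg_hat V pos \<beta> \<nu> x (-1);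
             G = good_vars V \<nu> k \<beta> in
          (exp (-\<beta>) \<le> r \<and> r \<le> exp \<beta>)
          \<and> (x \<in> pos_vars V pos \<longrightarrow> r \<ge> 1)
          \<and> (pos_vars V pos = {x} \<and> neg_vars V pos \<subseteq> G \<longrightarrow> r \<ge> exp (99/100 * \<beta>))
          \<and> (\<forall>p::nat. p \<ge> 1 \<and> card ((pos_vars V pos - {x}) \<inter> G) \<ge> p \<longrightarrow>
               r \<ge> exp (- exp (- real p * real k * \<beta> / 3))))"
proof -
  define q where "q = (\<Prod>y\<in>V - {x}. \<nu> y (if pos y then -1 else 1))"
  define c where "c = 1 - exp (-\<beta>)"
  define \<epsilon> where "\<epsilon> = exp (- real k * \<beta> / 2)"
  define r where "r = msg_hat V pos \<beta> \<nu> x 1 / msg_hat V pos \<beta> \<nu> x (-1)"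
  define G where "G = good_vars V \<nu> k \<beta>"
  have b250: "\<beta> \<ge> 250" using bk k by simp
  have b0: "\<beta> \<ge> 0" using b250 by simp
  have q0: "0 \<le> q" "q \<le> 1" using q_bounds[OF fin dist] unfolding q_def by auto
  have c0: "0 \<le> c" "c < 1" unfolding c_def using b0 by auto
  have cq: "c * q \<le> c" using q0 c0 by (simp add: mult_left_le)
  have cq': "c * q \<le> q" using q0 c0 by (simp add: mult_left_le_one_le)
  have cq0: "0 \<le> c * q" using q0 c0 by simp
  have r_eq: "r = (if pos x then 1 / (1 - c * q) else 1 - c * q)"
    unfolding r_def c_def q_def by (rule ratio[OF fin xV dist b0])
  have ebpos: "exp (-\<beta>) > 0" by simp
  have low: "1 - c * q \<ge> exp (-\<beta>)" using cq unfolding c_def by simp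
  have lpos: "1 - c * q > 0" using low ebpos by linarith
  have A: "exp (-\<beta>) \<le> r \<and> r \<le> exp \<beta>"
  proof (cases "pos x")
    case True
    have "1 / (1 - c * q) \<le> 1 / exp (-\<beta>)"
      using low ebpos lpos by (intro divide_left_mono) (auto intro: mult_pos_pos)
    moreover have "1 / exp (-\<beta>) = exp \<beta>" by (rule inv_exp)
    moreover have "1 \<le> 1 / (1 - c * q)" using cq0 lpos by (simp add: le_divide_eq)
    moreover have "exp (-\<beta>) \<le> 1" using b0 by simp
    moreover have "r = 1 / (1 - c * q)" using True r_eq by simp
    ultimately show ?thesis by linarith
  next
    case False
    have "1 \<le> exp \<beta>" using b0 by simp
    moreover have "r = 1 - c * q" using False r_eq by simp
    ultimately show ?thesis using low cq0 by linarith
  qed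
  have B: "x \<in> pos_vars V pos \<longrightarrow> r \<ge> 1"
    using r_eq cq0 lpos by (simp add: pos_vars_def le_divide_eq)
  have C: "pos_vars V pos = {x} \<and> neg_vars V pos \<subseteq> G \<longrightarrow> r \<ge> exp (99/100 * \<beta>)"
  proof
    assume h: "pos_vars V pos = {x} \<and> neg_vars V pos \<subseteq> G"
    have px: "pos x" using h xV unfolding pos_vars_def by auto
    have ny: "\<not> pos y \<and> \<nu> y 1 \<ge> 1 - \<epsilon>" if "y \<in> V - {x}" for y
    proof -
      have "\<not> pos y" using h that unfolding pos_vars_def by auto
      hence "y \<in> G" using h that unfolding neg_vars_def by auto
      thus ?thesis using \<open>\<not> pos y\<close> unfolding G_def good_vars_def \<epsilon>_def by auto
    qed
    have e01: "\<epsilon> \<le> 1" "0 \<le> \<epsilon>" unfolding \<epsilon>_def using b0 by auto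
    have "(\<Prod>y\<in>V - {x}. (1 - \<epsilon>)) \<le> q"
      unfolding q_def using ny e01 by (intro prod_mono) auto
    hence "(1 - \<epsilon>) ^ (k - 1) \<le> q" using cardV fin xV by simp
    moreover have "1 + real (k - 1) * (- \<epsilon>) \<le> (1 + (- \<epsilon>)) ^ (k - 1)"
      by (rule Bernoulli_inequality) (use e01 in simp)
    ultimately have qlow: "1 - real (k - 1) * \<epsilon> \<le> q" by simp
    have "(k/2 - 1) * \<beta> \<ge> (k/2 - 1) * 250" using b250 k by (intro mult_left_mono) auto
    hence big: "real k * \<beta> / 2 - \<beta> \<ge> real (k - 1)" using k by (simp add: algebra_simps)
    have "real (k - 1) \<le> exp (real k * \<beta> / 2 - \<beta>)"
      using big exp_ge_add_one_self[of "real k * \<beta> / 2 - \<beta>"] by linarith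
    hence "real (k - 1) * \<epsilon> \<le> exp (real k * \<beta> / 2 - \<beta>) * \<epsilon>"
      using e01 by (intro mult_right_mono) auto
    also have "\<dots> = exp (-\<beta>)" unfolding \<epsilon>_def by (simp flip: exp_add)
    finally have t1: "real (k - 1) * \<epsilon> \<le> exp (-\<beta>)" .
    have "q * exp (-\<beta>) \<le> exp (-\<beta>)" using q0 by (simp add: mult_left_le_one_le)
    moreover have "1 - c * q = 1 - q + q * exp (-\<beta>)" unfolding c_def by (simp add: algebra_simps)
    ultimately have "1 - c * q \<le> 2 * exp (-\<beta>)" using qlow t1 by linarith
    also have "2 * exp (-\<beta>) \<le> exp (\<beta>/100) * exp (-\<beta>)"
    proof -
      have "2 \<le> exp (\<beta>/100)" using exp_ge_add_one_self[of "\<beta>/100"] b250 by linarith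
      thus ?thesis by simp
    qed
    also have "\<dots> = exp (- (99/100 * \<beta>))" by (simp flip: exp_add)
    finally have le: "1 - c * q \<le> exp (- (99/100 * \<beta>))" .
    have "exp (99/100 * \<beta>) = 1 / exp (- (99/100 * \<beta>))" by (rule inv_exp[symmetric])
    also have "\<dots> \<le> 1 / (1 - c * q)" using le low ebpos lpos by (intro divide_left_mono) (auto intro: mult_pos_pos)
    finally show "r \<ge> exp (99/100 * \<beta>)" using r_eq px by simp
  qed
  have D: "\<forall>p::nat. p \<ge> 1 \<and> card ((pos_vars V pos - {x}) \<inter> G) \<ge> p \<longrightarrow>
               r \<ge> exp (- exp (- real p * real k * \<beta> / 3))"
  proof (intro allI impI)
    fix p :: nat
    assume h: "p \<ge> 1 \<and> card ((pos_vars V pos - {x}) \<inter> G) \<ge> p"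
    have eneg: "exp (- exp (- real p * real k * \<beta> / 3)) \<le> 1" by simp
    show "r \<ge> exp (- exp (- real p * real k * \<beta> / 3))"
    proof (cases "pos x")
      case True
      then have "r \<ge> 1" using B xV by (simp add: pos_vars_def)
      then show ?thesis using eneg by linarith
    next
      case False
      define S where "S = (pos_vars V pos - {x}) \<inter> G"
      have SV: "S \<subseteq> V - {x}" unfolding S_def pos_vars_def by auto
      have finV: "finite (V - {x})" using fin by simp
      have e01: "\<epsilon> \<le> 1" "0 \<le> \<epsilon>" unfolding \<epsilon>_def using b0 by auto
      define f where "f y = \<nu> y (if pos y then -1 else 1)" for y
      have f01: "0 \<le> f y" "f y \<le> 1" if "y \<in> V" for y
        using dist that unfolding f_def is_distr_def by (auto split: if_splits)
      have fS: "f y \<le> \<epsilon>" if "y \<in> S" for y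
      proof -
        have "pos y" "y \<in> V" "\<nu> y 1 \<ge> 1 - \<epsilon>" using that
          unfolding S_def pos_vars_def G_def good_vars_def \<epsilon>_def by auto
        thus ?thesis using dist unfolding f_def is_distr_def by auto
      qed
      have "q = prod f (V - {x} - S) * prod f S"
        unfolding q_def f_def[symmetric] by (rule prod.subset_diff[OF SV finV])
      also have "\<dots> \<le> 1 * prod f S"
        using f01 SV by (intro mult_right_mono prod_le_1 prod_nonneg) auto
      also have "prod f S \<le> (\<Prod>y\<in>S. \<epsilon>)"
        using f01 fS SV by (intro prod_mono) auto
      also have "\<dots> = \<epsilon> ^ card S" by simp
      also have "\<dots> \<le> \<epsilon> ^ p" using h e01 unfolding S_def by (intro power_decreasing) auto
      finally have qle: "q \<le> \<epsilon> ^ p" by simp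
      define w where "w = exp (- (real p * real k * \<beta> / 6))"
      have w0: "0 \<le> w" unfolding w_def by simp
      have "real p * real k * \<beta> / 6 \<ge> 1"
      proof -
        have "real p * real k \<ge> 1 * 1000" using h k by (intro mult_mono) auto
        hence "real p * real k * \<beta> \<ge> 1000 * 250" using b250 by (intro mult_mono) auto
        thus ?thesis by simp
      qed
      hence "w \<le> exp (-1)" unfolding w_def by simp
      also have "exp (-1) \<le> (1/2::real)"
      proof -
        have "2 \<le> exp (1::real)" using exp_ge_add_one_self[of 1] by simp
        thus ?thesis by (simp add: exp_minus field_simps)
      qed
      finally have w1: "w \<le> 1/2" .
      have w3: "\<epsilon> ^ p = w ^ 3" unfolding \<epsilon>_def w_def
        by (simp flip: exp_of_nat_mult)
      have w2: "exp (- real p * real k * \<beta> / 3) = w ^ 2" unfolding w_def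
        by (simp flip: exp_of_nat_mult)
      have "exp (- exp (- real p * real k * \<beta> / 3)) \<le> 1 - w ^ 3"
        unfolding w2 by (rule final_ineq[OF w0 w1])
      also have "\<dots> \<le> 1 - c * q" using qle cq' w3 by simp
      finally show ?thesis using r_eq False by simp
    qed
  qed
  show ?thesis unfolding Let_def r_def[symmetric] G_def[symmetric] using A B C D by blast
qed

lemma beta_bound:
  fixes k :: nat and \<beta> :: real
  assumes k: "k \<ge> 1000" and b: "\<beta> \<ge> real k * ln 2 - 10 * ln (real k)"
  shows "\<beta> \<ge> real k / 4"
proof -
  have e1: "exp (1/2::real) * exp (1/2) = exp 1" by (simp flip: exp_add)
  have "exp (1/2::real) \<le> 2"
  proof (rule ccontr)
    assume "\<not> exp (1/2::real) \<le> 2"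
    hence "exp (1/2::real) > 2" by simp
    hence "exp (1/2::real) * exp (1/2) > 2 * 2" by (intro mult_strict_mono) auto
    thus False using e1 exp_le by simp
  qed
  hence ln2: "ln 2 \<ge> (1/2::real)" by (subst ln_ge_iff) auto
  have "exp (9::real) = exp 1 ^ 9" using exp_of_nat_mult[of 9 1] by simp
  moreover have "(2::real) ^ 9 \<le> exp 1 ^ 9"
    using exp_ge_add_one_self[of 1] by (intro power_mono) auto
  ultimately have "400 \<le> exp (9::real)" by simp
  hence "ln 400 \<le> ln (exp (9::real))" by (subst ln_le_cancel_iff) auto
  hence ln400: "ln (400::real) \<le> 9" by simp
  have kpos: "real k > 0" using k by simp
  have "ln (real k / 400) \<le> real k / 400 - 1" using kpos by (intro ln_le_minus_one) simp
  moreover have "ln (real k / 400) = ln (real k) - ln 400" using kpos by (simp add: ln_divide_pos)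
  ultimately have lnk: "ln (real k) \<le> real k / 400 + 8" using ln400 by linarith
  have "real k * ln 2 \<ge> real k * (1/2)" using ln2 by (intro mult_left_mono) auto
  thus ?thesis using b lnk k by linarith
qed

theorem lemma3p5:
  shows "\<exists>k0::nat. \<forall>k\<ge>k0. \<forall>\<beta>::real. \<beta> \<ge> real k * ln 2 - 10 * ln (real k) \<longrightarrow>
    (\<forall>(V::nat set) (pos::nat \<Rightarrow> bool) (\<nu>::nat \<Rightarrow> int \<Rightarrow> real).
      finite V \<and> card V = k \<and> (\<forall>y\<in>V. is_distr (\<nu> y)) \<longrightarrow>
      (\<forall>x\<in>V.
        (let r = msg_hat V pos \<beta> \<nu> x 1 / msg_hat V pos \<beta> \<nu> x (-1);
             G = good_vars V \<nu> k \<beta> in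
          (exp (-\<beta>) \<le> r \<and> r \<le> exp \<beta>)
          \<and> (x \<in> pos_vars V pos \<longrightarrow> r \<ge> 1)
          \<and> (pos_vars V pos = {x} \<and> neg_vars V pos \<subseteq> G \<longrightarrow> r \<ge> exp (99/100 * \<beta>))
          \<and> (\<forall>p::nat. p \<ge> 1 \<and> card ((pos_vars V pos - {x}) \<inter> G) \<ge> p \<longrightarrow>
               r \<ge> exp (- exp (- real p * real k * \<beta> / 3))))))"
proof (intro exI[of _ 1000] allI impI ballI)
  fix k :: nat and \<beta> :: real and V :: "nat set" and pos \<nu> x
  assume k: "1000 \<le> k" and b: "\<beta> \<ge> real k * ln 2 - 10 * ln (real k)"
    and h: "finite V \<and> card V = k \<and> (\<forall>y\<in>V. is_distr (\<nu> y))" and xV: "x \<in> V"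
  have bk: "\<beta> \<ge> real k / 4" by (rule beta_bound[OF k b])
  show "(let r = msg_hat V pos \<beta> \<nu> x 1 / msg_hat V pos \<beta> \<nu> x (-1);
             G = good_vars V \<nu> k \<beta> in
          (exp (-\<beta>) \<le> r \<and> r \<le> exp \<beta>)
          \<and> (x \<in> pos_vars V pos \<longrightarrow> r \<ge> 1)
          \<and> (pos_vars V pos = {x} \<and> neg_vars V pos \<subseteq> G \<longrightarrow> r \<ge> exp (99/100 * \<beta>))
          \<and> (\<forall>p::nat. p \<ge> 1 \<and> card ((pos_vars V pos - {x}) \<inter> G) \<ge> p \<longrightarrow>
               r \<ge> exp (- exp (- real p * real k * \<beta> / 3))))"
    using per_clause[of V k \<nu> x \<beta> pos] h xV bk k by blast
qed

end
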